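(* Let $u,v,w$ be three pairwise non-adjacent vertices in a $\{P_5,\overline{P_5}\}$-free graph $G$, and suppose $w$ is mixed on a set $A\subseteq N(u)\cap N(v)$ with $G[A]$ anticonnected. Then no vertex $z\in N(w)\setminus(A\cup\{u,v\})$ is mixed on $\{u,v\}$.
   Context: All graphs are finite and simple. $N(x)$ is the set of neighbors of $x$. $P_5$ is the path on five vertices, $\overline{P_5}$ its complement; $G$ is $\mathcal F$-free if it has no induced subgraph isomorphic to a member of $\mathcal F$. A graph is anticonnected if its complement is connected. A vertex $b\notin X$ is mixed on $X$ if it has both a neighbor and a non-neighbor in $X$. *)

theory Defs
  imports Main
begin

definition graph :: "'a set \<Rightarrow> ('a \<Rightarrow> 'a \<Rightarrow> bool) \<Rightarrow> bool" where
  "graph V E \<longleftrightarrow> finite V \<and> (\<forall>x y. E x y \<longrightarrow> x \<in> V \<and> y \<in> V)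
                 \<and> (\<forall>x y. E x y \<longrightarrow> E y x) \<and> (\<forall>x. \<not> E x x)"

definition nbhd :: "'a set \<Rightarrow> ('a \<Rightarrow> 'a \<Rightarrow> bool) \<Rightarrow> 'a \<Rightarrow> 'a set" where
  "nbhd V E x = {y \<in> V. E x y}"

definition has_induced_P5 :: "'a set \<Rightarrow> ('a \<Rightarrow> 'a \<Rightarrow> bool) \<Rightarrow> bool" where
  "has_induced_P5 V E \<longleftrightarrow> (\<exists>p :: nat \<Rightarrow> 'a. inj_on p {0..<5} \<and> p ` {0..<5} \<subseteq> V \<and>
     (\<forall>i<5. \<forall>j<5. i \<noteq> j \<longrightarrow> (E (p i) (p j) \<longleftrightarrow> i + 1 = j \<or> j + 1 = i)))"

definition has_induced_co_P5 :: "'a set \<Rightarrow> ('a \<Rightarrow> 'a \<Rightarrow> bool) \<Rightarrow> bool" where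
  "has_induced_co_P5 V E \<longleftrightarrow> (\<exists>p :: nat \<Rightarrow> 'a. inj_on p {0..<5} \<and> p ` {0..<5} \<subseteq> V \<and>
     (\<forall>i<5. \<forall>j<5. i \<noteq> j \<longrightarrow> (E (p i) (p j) \<longleftrightarrow> \<not> (i + 1 = j \<or> j + 1 = i))))"

definition P5_coP5_free :: "'a set \<Rightarrow> ('a \<Rightarrow> 'a \<Rightarrow> bool) \<Rightarrow> bool" where
  "P5_coP5_free V E \<longleftrightarrow> \<not> has_induced_P5 V E \<and> \<not> has_induced_co_P5 V E"

definition anticonnected :: "('a \<Rightarrow> 'a \<Rightarrow> bool) \<Rightarrow> 'a set \<Rightarrow> bool" where
  "anticonnected E A \<longleftrightarrow> A \<noteq> {} \<and>
     (\<forall>x\<in>A. \<forall>y\<in>A. (\<lambda>a b. a \<in> A \<and> b \<in> A \<and> a \<noteq> b \<and> \<not> E a b)\<^sup>*\<^sup>* x y)"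

definition mixed :: "('a \<Rightarrow> 'a \<Rightarrow> bool) \<Rightarrow> 'a \<Rightarrow> 'a set \<Rightarrow> bool" where
  "mixed E b X \<longleftrightarrow> b \<notin> X \<and> (\<exists>x\<in>X. E b x) \<and> (\<exists>x\<in>X. \<not> E b x)"

end

theory Submission
  imports Defs
begin

lemma five_cases: "(i::nat) < 5 \<longleftrightarrow> i = 0 \<or> i = 1 \<or> i = 2 \<or> i = 3 \<or> i = 4" by auto

lemma coP5_intro:
  assumes sym: "\<And>x y. E x y \<Longrightarrow> E y x"
    and V: "x0 \<in> V" "x1 \<in> V" "x2 \<in> V" "x3 \<in> V" "x4 \<in> V"
    and d: "distinct [x0,x1,x2,x3,x4]"
    and n: "\<not> E x0 x1" "\<not> E x1 x2" "\<not> E x2 x3" "\<not> E x3 x4"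
    and e: "E x0 x2" "E x0 x3" "E x0 x4" "E x1 x3" "E x1 x4" "E x2 x4"
  shows "has_induced_co_P5 V E"
  unfolding has_induced_co_P5_def
proof (intro exI[of _ "\<lambda>i. [x0,x1,x2,x3,x4] ! i"] conjI)
  show "inj_on (\<lambda>i. [x0, x1, x2, x3, x4] ! i) {0..<5}"
    using d unfolding inj_on_def by (auto simp: five_cases)
  show "(\<lambda>i. [x0, x1, x2, x3, x4] ! i) ` {0..<5} \<subseteq> V"
    using V by (auto simp: five_cases)
  have n': "\<not> E x1 x0" "\<not> E x2 x1" "\<not> E x3 x2" "\<not> E x4 x3" using n sym by blast+
  have e': "E x2 x0" "E x3 x0" "E x4 x0" "E x3 x1" "E x4 x1" "E x4 x2" using e sym by blast+
  show "\<forall>i<5. \<forall>j<5. i \<noteq> j \<longrightarrow> (E ([x0, x1, x2, x3, x4] ! i) ([x0, x1, x2, x3, x4] ! j)) = (\<not> (i + 1 = j \<or> j + 1 = i))"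
    unfolding five_cases using n n' e e' by auto
qed

lemma P5_intro:
  assumes sym: "\<And>x y. E x y \<Longrightarrow> E y x"
    and V: "x0 \<in> V" "x1 \<in> V" "x2 \<in> V" "x3 \<in> V" "x4 \<in> V"
    and d: "distinct [x0,x1,x2,x3,x4]"
    and n: "E x0 x1" "E x1 x2" "E x2 x3" "E x3 x4"
    and e: "\<not> E x0 x2" "\<not> E x0 x3" "\<not> E x0 x4" "\<not> E x1 x3" "\<not> E x1 x4" "\<not> E x2 x4"
  shows "has_induced_P5 V E"
  unfolding has_induced_P5_def
proof (intro exI[of _ "\<lambda>i. [x0,x1,x2,x3,x4] ! i"] conjI)
  show "inj_on (\<lambda>i. [x0, x1, x2, x3, x4] ! i) {0..<5}"
    using d unfolding inj_on_def by (auto simp: five_cases)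
  show "(\<lambda>i. [x0, x1, x2, x3, x4] ! i) ` {0..<5} \<subseteq> V"
    using V by (auto simp: five_cases)
  have n': "E x1 x0" "E x2 x1" "E x3 x2" "E x4 x3" using n sym by blast+
  have e': "\<not> E x2 x0" "\<not> E x3 x0" "\<not> E x4 x0" "\<not> E x3 x1" "\<not> E x4 x1" "\<not> E x4 x2" using e sym by blast+
  show "\<forall>i<5. \<forall>j<5. i \<noteq> j \<longrightarrow> (E ([x0, x1, x2, x3, x4] ! i) ([x0, x1, x2, x3, x4] ! j)) = (i + 1 = j \<or> j + 1 = i)"
    unfolding five_cases using n n' e e' by auto
qed

lemma mixed_pair:
  assumes "anticonnected E A" and "mixed E w A"
  shows "\<exists>a\<in>A. \<exists>b\<in>A. E w a \<and> \<not> E w b \<and> \<not> E a b"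
proof -
  obtain x y where x: "x \<in> A" "E w x" and y: "y \<in> A" "\<not> E w y"
    using assms(2) unfolding mixed_def by blast
  have r: "(\<lambda>a b. a \<in> A \<and> b \<in> A \<and> a \<noteq> b \<and> \<not> E a b)\<^sup>*\<^sup>* x y"
    using assms(1) x y unfolding anticonnected_def by blast
  have "\<not> E w y \<longrightarrow> (\<exists>a\<in>A. \<exists>b\<in>A. E w a \<and> \<not> E w b \<and> \<not> E a b)"
    using r
  proof (induction rule: rtranclp_induct)
    case base then show ?case using x by blast
  next
    case (step y z) then show ?case by blast
  qed
  then show ?thesis using y by blast
qed

lemma core:
  assumes g: "graph V E" and f: "P5_coP5_free V E"
    and "u \<in> V" and "v \<in> V" and "w \<in> V"
    and "u \<noteq> v" and "u \<noteq> w" and "v \<noteq> w"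
    and "\<not> E u v" and "\<not> E u w" and "\<not> E v w"
    and A: "a \<in> V" "b \<in> V" "E u a" "E v a" "E u b" "E v b" "E w a" "\<not> E w b" "\<not> E a b"
    and z: "z \<in> V" "E w z" "z \<noteq> a" "z \<noteq> b" "z \<noteq> u" "z \<noteq> v" "E z u" "\<not> E z v"
  shows False
proof -
  have sym: "\<And>x y. E x y \<Longrightarrow> E y x" and irr: "\<And>x. \<not> E x x"
    using g unfolding graph_def by blast+
  have noP: "\<not> has_induced_P5 V E" "\<not> has_induced_co_P5 V E" using f unfolding P5_coP5_free_def by auto
  have dist: "a \<noteq> u" "a \<noteq> v" "a \<noteq> w" "b \<noteq> u" "b \<noteq> v" "b \<noteq> w" "a \<noteq> b"
  proof -
    show "a \<noteq> u" using A(3) irr by blast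
    show "a \<noteq> v" using A(4) irr by blast
    show "a \<noteq> w" using A(7) irr by blast
    show "b \<noteq> u" using A(5) irr by blast
    show "b \<noteq> v" using A(6) irr by blast
    show "b \<noteq> w" using A(5) assms(10) by blast
    show "a \<noteq> b" using A(7,8) by blast
  qed
  show False
  proof (cases "E z b")
    case False
    have "has_induced_P5 V E"
      by (rule P5_intro[of E v V b u z w]) (use sym assms dist False in auto)
    then show False using noP by blast
  next
    case zb: True
    show False
    proof (cases "E z a")
      case False
      have "has_induced_co_P5 V E"
        by (rule coP5_intro[of E u V w b a z]) (use sym assms dist False zb in auto)
      then show False using noP by blast
    next
      case True
      have "has_induced_co_P5 V E"
        by (rule coP5_intro[of E a V b w v z]) (use sym assms dist True zb in auto)
      then show False using noP by blast
    qed
  qed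
qed

theorem lemma2p6:
  fixes V :: "'a set" and E :: "'a \<Rightarrow> 'a \<Rightarrow> bool" and u v w :: 'a and A :: "'a set"
  assumes "graph V E" and "P5_coP5_free V E"
    and "u \<in> V" and "v \<in> V" and "w \<in> V"
    and "u \<noteq> v" and "u \<noteq> w" and "v \<noteq> w"
    and "\<not> E u v" and "\<not> E u w" and "\<not> E v w"
    and "A \<subseteq> nbhd V E u \<inter> nbhd V E v"
    and "anticonnected E A"
    and "mixed E w A"
  shows "\<forall>z \<in> nbhd V E w - (A \<union> {u, v}). \<not> mixed E z {u, v}"
proof (intro ballI notI)
  fix z assume zA: "z \<in> nbhd V E w - (A \<union> {u, v})" and m: "mixed E z {u, v}"
  have sym: "\<And>x y. E x y \<Longrightarrow> E y x" using assms(1) unfolding graph_def by blast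
  obtain a b where ab: "a \<in> A" "b \<in> A" "E w a" "\<not> E w b" "\<not> E a b"
    using mixed_pair[OF assms(13,14)] by blast
  have aV: "a \<in> V" "b \<in> V" "E u a" "E v a" "E u b" "E v b"
    using ab assms(12) unfolding nbhd_def by auto
  have z: "z \<in> V" "E w z" "z \<noteq> a" "z \<noteq> b" "z \<noteq> u" "z \<noteq> v"
    using zA ab unfolding nbhd_def by auto
  have vu: "\<not> E v u" using assms(9) sym by blast
  from m have "(E z u \<and> \<not> E z v) \<or> (E z v \<and> \<not> E z u)"
    unfolding mixed_def by auto
  then show False
  proof
    assume "E z u \<and> \<not> E z v"
    then show False
      using core[OF assms(1-11) aV(1,2,3,4,5,6) ab(3,4,5) z] by blast
  next
    assume "E z v \<and> \<not> E z u"
    then show False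
      using core[OF assms(1,2,4,3,5) assms(6)[symmetric] assms(8,7) vu assms(11,10)
          aV(1,2,4,3,6,5) ab(3,4,5) z(1-4,6,5)] by blast
  qed
qed

end
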